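(* Let $m_1,m_2,m_3,m_4>0$, $M=\sum m_i$, $I(\mathbf{r})=\frac{1}{2M}\sum_{i<j}m_im_jr_{ij}^2$ and $P(\mathbf{r})=r_{12}r_{34}+r_{14}r_{23}-r_{13}r_{24}$ for $\mathbf{r}=(r_{12},r_{13},r_{14},r_{23},r_{24},r_{34})$. The set $\mathcal{M}^+=\{\mathbf{r}\in[0,\infty)^6: I(\mathbf{r})=1,\ P(\mathbf{r})=0\}$ is contractible, and its Euler characteristic is $\chi(\mathcal{M}^+)=1$. *)

theory Defs
  imports "HOL-Homology.Homology" "HOL-Library.Extended_Nat"
begin

definition Z_independent :: "('a, 'b) monoid_scheme \<Rightarrow> 'a set \<Rightarrow> bool" where
  "Z_independent G S \<longleftrightarrow> S \<subseteq> carrier G \<and>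
     (\<forall>c :: 'a \<Rightarrow> int. finprod G (\<lambda>s. s [^]\<^bsub>G\<^esub> (c s)) S = \<one>\<^bsub>G\<^esub> \<longrightarrow> (\<forall>s\<in>S. c s = 0))"

definition group_rank :: "('a, 'b) monoid_scheme \<Rightarrow> enat" where
  "group_rank G = (SUP S \<in> {S. finite S \<and> Z_independent G S}. enat (card S))"

definition has_euler_characteristic :: "'a topology \<Rightarrow> int \<Rightarrow> bool" where
  "has_euler_characteristic X k \<longleftrightarrow>
     (\<forall>n::nat. group_rank (homology_group (int n) X) \<noteq> \<infinity>) \<and>
     finite {n::nat. group_rank (homology_group (int n) X) \<noteq> 0} \<and>
     k = (\<Sum>n\<in>{n::nat. group_rank (homology_group (int n) X) \<noteq> 0}.
            (-1) ^ n * int (the_enat (group_rank (homology_group (int n) X))))"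

text \<open>Coordinates r = (r12, r13, r14, r23, r24, r34) are the components 1..6 of a vector in real^6.\<close>
definition moment_I :: "real \<Rightarrow> real \<Rightarrow> real \<Rightarrow> real \<Rightarrow> real^6 \<Rightarrow> real" where
  "moment_I m1 m2 m3 m4 r =
     (m1*m2*(r$1)^2 + m1*m3*(r$2)^2 + m1*m4*(r$3)^2 + m2*m3*(r$4)^2 + m2*m4*(r$5)^2
      + m3*m4*(r$6)^2) / (2 * (m1 + m2 + m3 + m4))"

definition ptolemy_P :: "real^6 \<Rightarrow> real" where
  "ptolemy_P r = r$1 * r$6 + r$3 * r$4 - r$2 * r$5"

definition Mplus :: "real \<Rightarrow> real \<Rightarrow> real \<Rightarrow> real \<Rightarrow> (real^6) set" where
  "Mplus m1 m2 m3 m4 = {r. (\<forall>i. r$i \<ge> 0) \<and> moment_I m1 m2 m3 m4 r = 1 \<and> ptolemy_P r = 0}"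

end

theory Submission
  imports Defs "HOL-Analysis.Cartesian_Euclidean_Space"
begin

definition zf :: "real \<Rightarrow> real \<Rightarrow> real" where
  "zf d w = (d + sqrt (d^2 + 4*w)) / 2"

definition SS :: "real \<Rightarrow> real^6 \<Rightarrow> real^6" where
  "SS t r = (let a = 1 - t; x1 = a * r$1 + t; x2 = a * r$6; y1 = a * r$3; y2 = a * r$4;
      d = a * (r$2 - r$5); w = x1*x2 + y1*y2 in
     (\<chi> i. if i = 1 then x1 else if i = 2 then zf d w else if i = 3 then y1
           else if i = 4 then y2 else if i = 5 then zf (-d) w else x2))"

lemma SS_comp: "SS t r $ 1 = (1-t) * r$1 + t"
  "SS t r $ 6 = (1-t) * r$6" "SS t r $ 3 = (1-t) * r$3" "SS t r $ 4 = (1-t) * r$4"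
  "SS t r $ 2 = zf ((1-t) * (r$2 - r$5)) (((1-t) * r$1 + t) * ((1-t) * r$6) + ((1-t) * r$3) * ((1-t) * r$4))"
  "SS t r $ 5 = zf (-((1-t) * (r$2 - r$5))) (((1-t) * r$1 + t) * ((1-t) * r$6) + ((1-t) * r$3) * ((1-t) * r$4))"
  by (simp_all add: SS_def Let_def)

lemma zf_nonneg: "w \<ge> 0 \<Longrightarrow> zf d w \<ge> 0"
proof -
  assume "w \<ge> 0"
  then have "sqrt (d^2) \<le> sqrt (d^2 + 4*w)" by (intro real_sqrt_le_mono) simp
  then have "\<bar>d\<bar> \<le> sqrt (d^2 + 4*w)" by simp
  then have "-d \<le> sqrt (d^2 + 4*w)" by linarith
  then show ?thesis unfolding zf_def by simp
qed

lemma zf_prod: "w \<ge> 0 \<Longrightarrow> zf d w * zf (-d) w = w"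
proof -
  assume "w \<ge> 0"
  then have "d^2 + 4*w \<ge> 0" by simp
  then have s: "(sqrt (d^2 + 4*w))^2 = d^2 + 4*w" by simp
  have "zf d w * zf (-d) w = ((sqrt (d^2 + 4*w))^2 - d^2) / 4"
    unfolding zf_def by (simp add: field_simps power2_eq_square)
  then show ?thesis using s by simp
qed

lemma zf_id: "a \<ge> 0 \<Longrightarrow> b \<ge> 0 \<Longrightarrow> zf (a - b) (a*b) = a" "a \<ge> 0 \<Longrightarrow> b \<ge> 0 \<Longrightarrow> zf (-(a - b)) (a*b) = b"
proof -
  assume "a \<ge> 0" "b \<ge> 0"
  have "(a-b)^2 + 4*(a*b) = (a+b)^2" by (simp add: power2_eq_square algebra_simps)
  then have "sqrt ((a-b)^2 + 4*(a*b)) = a + b" using \<open>a \<ge> 0\<close> \<open>b \<ge> 0\<close> by simp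
  then show "zf (a - b) (a*b) = a" "zf (-(a - b)) (a*b) = b" unfolding zf_def by (simp_all add: power2_commute)
qed

lemma exhaust_6:
  fixes x :: 6
  shows "x = 1 \<or> x = 2 \<or> x = 3 \<or> x = 4 \<or> x = 5 \<or> x = 6"
proof (induct x)
  case (of_int z)
  then have "z = 0 \<or> z = 1 \<or> z = 2 \<or> z = 3 \<or> z = 4 \<or> z = 5" by fastforce
  then show ?case by auto
qed

lemma SS_nonneg:
  assumes "0 \<le> t" "t \<le> 1" "\<forall>i. r$i \<ge> 0"
  shows "SS t r $ i \<ge> 0"
proof -
  have a: "1 - t \<ge> 0" using assms by simp
  have w: "((1-t) * r$1 + t) * ((1-t) * r$6) + ((1-t) * r$3) * ((1-t) * r$4) \<ge> 0"
    using a assms by (simp add: mult_nonneg_nonneg add_nonneg_nonneg)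
  show ?thesis using exhaust_6[of i] a assms w
    by (auto simp: SS_comp zf_nonneg mult_nonneg_nonneg add_nonneg_nonneg)
qed

lemma SS_P:
  assumes "0 \<le> t" "t \<le> 1" "\<forall>i. r$i \<ge> 0"
  shows "ptolemy_P (SS t r) = 0"
proof -
  have a: "1 - t \<ge> 0" using assms by simp
  have w: "((1-t) * r$1 + t) * ((1-t) * r$6) + ((1-t) * r$3) * ((1-t) * r$4) \<ge> 0"
    using a assms by (simp add: mult_nonneg_nonneg add_nonneg_nonneg)
  show ?thesis unfolding ptolemy_P_def SS_comp using zf_prod[OF w] by simp
qed

lemma SS_0:
  assumes "\<forall>i. r$i \<ge> 0" "ptolemy_P r = 0"
  shows "SS 0 r = r"
proof -
  have e: "r$1 * r$6 + r$3 * r$4 = r$2 * r$5" using assms(2) unfolding ptolemy_P_def by simp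
  have "SS 0 r $ i = r $ i" for i
    using exhaust_6[of i] zf_id[of "r$2" "r$5"] assms(1) by (auto simp: SS_comp e)
  then show ?thesis by (simp add: vec_eq_iff)
qed

lemma moment_scale: "moment_I m1 m2 m3 m4 (c *\<^sub>R s) = c^2 * moment_I m1 m2 m3 m4 s"
  unfolding moment_I_def by (simp add: field_simps power_mult_distrib)

lemma P_scale: "ptolemy_P (c *\<^sub>R s) = c^2 * ptolemy_P s"
  unfolding ptolemy_P_def by (simp add: field_simps power2_eq_square)

lemma moment_nonneg:
  assumes "m1 > 0" "m2 > 0" "m3 > 0" "m4 > 0"
  shows "moment_I m1 m2 m3 m4 s \<ge> 0"
  unfolding moment_I_def using assms
  by (intro divide_nonneg_nonneg add_nonneg_nonneg mult_nonneg_nonneg) auto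

lemma SS_I_pos:
  assumes m: "m1 > 0" "m2 > 0" "m3 > 0" "m4 > 0" and t: "0 \<le> t" "t \<le> 1"
    and r: "r \<in> Mplus m1 m2 m3 m4"
  shows "moment_I m1 m2 m3 m4 (SS t r) > 0"
proof (cases "t = 0")
  case True
  with r show ?thesis by (simp add: Mplus_def SS_0)
next
  case False
  then have tp: "t > 0" using t by simp
  have r0: "\<forall>i. r$i \<ge> 0" using r by (simp add: Mplus_def)
  have "SS t r $ 1 > 0" using tp t r0 by (simp add: SS_comp add_nonneg_pos mult_nonneg_nonneg)
  then have p: "m1*m2*(SS t r $ 1)^2 > 0" using m by simp
  have "0 \<le> m1*m3*(SS t r$2)^2 + m1*m4*(SS t r$3)^2 + m2*m3*(SS t r$4)^2 + m2*m4*(SS t r$5)^2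
      + m3*m4*(SS t r$6)^2" using m by (intro add_nonneg_nonneg mult_nonneg_nonneg) auto
  with p have "0 < m1*m2*(SS t r $ 1)^2 + m1*m3*(SS t r$2)^2 + m1*m4*(SS t r$3)^2 + m2*m3*(SS t r$4)^2 + m2*m4*(SS t r$5)^2
      + m3*m4*(SS t r$6)^2" by linarith
  then show ?thesis unfolding moment_I_def using m by simp
qed

definition HH where
  "HH m1 m2 m3 m4 t r = (1 / sqrt (moment_I m1 m2 m3 m4 (SS t r))) *\<^sub>R SS t r"

lemma HH_in:
  assumes m: "m1 > 0" "m2 > 0" "m3 > 0" "m4 > 0" and t: "0 \<le> t" "t \<le> 1"
    and r: "r \<in> Mplus m1 m2 m3 m4"
  shows "HH m1 m2 m3 m4 t r \<in> Mplus m1 m2 m3 m4"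
proof -
  have r0: "\<forall>i. r$i \<ge> 0" using r by (simp add: Mplus_def)
  have I: "moment_I m1 m2 m3 m4 (SS t r) > 0" by (rule SS_I_pos[OF m t r])
  have "HH m1 m2 m3 m4 t r $ i \<ge> 0" for i
    unfolding HH_def using SS_nonneg[OF t r0, of i] I by simp
  moreover have "moment_I m1 m2 m3 m4 (HH m1 m2 m3 m4 t r) = 1"
    unfolding HH_def moment_scale using I by (simp add: power_divide)
  moreover have "ptolemy_P (HH m1 m2 m3 m4 t r) = 0"
    unfolding HH_def P_scale using SS_P[OF t r0] by simp
  ultimately show ?thesis by (simp add: Mplus_def)
qed

lemma HH_0:
  assumes "r \<in> Mplus m1 m2 m3 m4"
  shows "HH m1 m2 m3 m4 0 r = r"
  using assms by (simp add: HH_def Mplus_def SS_0)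

lemma cont_if_const: "continuous_on S f \<Longrightarrow> continuous_on S g \<Longrightarrow> continuous_on S (\<lambda>x. if c then f x else g x)"
  by (cases c) auto

lemma zf_cont:
  assumes "continuous_on S d" "continuous_on S w"
  shows "continuous_on S (\<lambda>x. zf (d x) (w x))"
  unfolding zf_def by (intro continuous_intros assms) simp

lemma SS_cont: "continuous_on S (\<lambda>p. SS (fst p) (snd p))"
proof -
  have c: "continuous_on S (\<lambda>p. SS (fst p) (snd p) $ i)" for i
  proof -
    have cw: "continuous_on S (\<lambda>p. ((1 - fst p) * snd p $ 1 + fst p) * ((1 - fst p) * snd p $ 6)
       + ((1 - fst p) * snd p $ 3) * ((1 - fst p) * snd p $ 4))"
      by (intro continuous_intros)
    have cd: "continuous_on S (\<lambda>p. (1 - fst p) * (snd p $ 2 - snd p $ 5))"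
      by (intro continuous_intros)
    have cd2: "continuous_on S (\<lambda>p. - ((1 - fst p) * (snd p $ 2 - snd p $ 5)))"
      by (intro continuous_intros)
    show ?thesis
      using exhaust_6[of i]
      apply (elim disjE)
      apply (simp_all only: SS_comp)
      apply (intro continuous_intros)
      apply (rule zf_cont[OF cd cw])
      apply (intro continuous_intros)
      apply (intro continuous_intros)
      apply (rule zf_cont[OF cd2 cw])
      apply (intro continuous_intros)
      done
  qed
  show ?thesis using continuous_on_vec_lambda[of S "\<lambda>i p. SS (fst p) (snd p) $ i", OF c] by simp
qed

lemma HH_cont:
  assumes m: "m1 > 0" "m2 > 0" "m3 > 0" "m4 > 0"
  shows "continuous_on ({0..1} \<times> Mplus m1 m2 m3 m4) (\<lambda>p. HH m1 m2 m3 m4 (fst p) (snd p))"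
proof -
  let ?D = "{0..1} \<times> Mplus m1 m2 m3 m4"
  have cS: "continuous_on ?D (\<lambda>p. SS (fst p) (snd p))" by (rule SS_cont)
  have ci: "continuous_on ?D (\<lambda>p. SS (fst p) (snd p) $ i)" for i
    by (rule continuous_on_component[OF cS])
  have M: "2 * (m1 + m2 + m3 + m4) \<noteq> 0" using m by simp
  have cI: "continuous_on ?D (\<lambda>p. moment_I m1 m2 m3 m4 (SS (fst p) (snd p)))"
    unfolding moment_I_def
    by (rule continuous_on_divide) (intro continuous_on_add continuous_on_mult continuous_on_const continuous_on_power ci, rule continuous_on_const, use M in simp)
  have cq: "continuous_on ?D (\<lambda>p. 1 / sqrt (moment_I m1 m2 m3 m4 (SS (fst p) (snd p))))"
  proof (rule continuous_on_divide)
    show "continuous_on ?D (\<lambda>p. sqrt (moment_I m1 m2 m3 m4 (SS (fst p) (snd p))))"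
      by (rule continuous_on_real_sqrt[OF cI])
    show "\<forall>x\<in>?D. sqrt (moment_I m1 m2 m3 m4 (SS (fst x) (snd x))) \<noteq> 0"
      using SS_I_pos[OF m] by fastforce
  qed (rule continuous_on_const)
  show ?thesis unfolding HH_def by (rule continuous_on_scaleR[OF cq cS])
qed

lemma contr:
  assumes m: "m1 > 0" "m2 > 0" "m3 > 0" "m4 > 0"
  shows "contractible (Mplus m1 m2 m3 m4)"
proof -
  let ?h = "\<lambda>p. HH m1 m2 m3 m4 (fst p) (snd p)"
  have c: "continuous_map (prod_topology (top_of_set {0..1}) (top_of_set (Mplus m1 m2 m3 m4)))
     (top_of_set (Mplus m1 m2 m3 m4)) ?h"
    unfolding subtopology_Times[symmetric, of euclidean _ euclidean, simplified] continuous_map_subtopology_eu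
    using HH_cont[OF m] HH_in[OF m] by auto
  have z: "\<forall>x\<in>Mplus m1 m2 m3 m4. ?h (0, x) = id x" using HH_0 by simp
  have e: "SS 1 x = SS 1 0" for x by (simp add: SS_def)
  have o: "\<forall>x\<in>Mplus m1 m2 m3 m4. ?h (1, x) = HH m1 m2 m3 m4 1 0" unfolding HH_def fst_conv snd_conv
    by (metis e)
  have "homotopic_with_canon (\<lambda>x. True) (Mplus m1 m2 m3 m4) (Mplus m1 m2 m3 m4) id (\<lambda>x. HH m1 m2 m3 m4 1 0)"
    apply (subst homotopic_with)
     apply simp
    apply (rule exI[of _ ?h])
    using c z o by simp
  then show ?thesis unfolding contractible_def by blast
qed



lemma hom_finprod_gen:
  assumes G: "comm_group G" and H: "comm_group H" and h: "h \<in> hom G H"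
    and S: "finite S" and f: "f \<in> S \<rightarrow> carrier G"
  shows "h (finprod G f S) = finprod H (\<lambda>x. h (f x)) S"
  using S f
proof (induction S rule: finite_induct)
  case empty
  interpret G: comm_group G by fact
  interpret H: comm_group H by fact
  show ?case using hom_one[OF h G.is_group H.is_group] by simp
next
  case (insert a F)
  interpret G: comm_group G by fact
  interpret H: comm_group H by fact
  have fa: "f a \<in> carrier G" and fF: "f \<in> F \<rightarrow> carrier G" using insert.prems by auto
  have hF: "(\<lambda>x. h (f x)) \<in> F \<rightarrow> carrier H" using fF h by (auto simp: hom_def)
  have ha: "h (f a) \<in> carrier H" using fa h by (auto simp: hom_def)
  have "h (finprod G f (insert a F)) = h (f a \<otimes>\<^bsub>G\<^esub> finprod G f F)"
    using insert fa fF by simp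
  also have "\<dots> = h (f a) \<otimes>\<^bsub>H\<^esub> h (finprod G f F)"
    using h fa fF by (simp add: hom_mult)
  also have "\<dots> = finprod H (\<lambda>x. h (f x)) (insert a F)"
    using insert fF hF ha by simp
  finally show ?case .
qed

lemma indep_transfer:
  assumes G: "comm_group G" and H: "comm_group H" and h: "h \<in> iso G H"
    and S: "finite S" and ind: "Z_independent G S"
  shows "Z_independent H (h ` S)"
  unfolding Z_independent_def
proof (intro conjI allI impI ballI)
  interpret G: comm_group G by fact
  interpret H: comm_group H by fact
  have hh: "h \<in> hom G H" using h by (simp add: iso_iff)
  have inj: "inj_on h (carrier G)" using h by (simp add: iso_iff)
  have SG: "S \<subseteq> carrier G" using ind by (simp add: Z_independent_def)
  show "h ` S \<subseteq> carrier H" using hh SG by (auto simp: hom_def)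
  fix c :: "_ \<Rightarrow> int" and s
  assume eq: "finprod H (\<lambda>s. s [^]\<^bsub>H\<^esub> c s) (h ` S) = \<one>\<^bsub>H\<^esub>" and s: "s \<in> h ` S"
  have "finprod H (\<lambda>s. s [^]\<^bsub>H\<^esub> c s) (h ` S) = finprod H (\<lambda>x. h x [^]\<^bsub>H\<^esub> c (h x)) S"
    by (rule H.finprod_reindex) (use \<open>h ` S \<subseteq> carrier H\<close> inj SG in \<open>auto intro: inj_on_subset\<close>)
  also have "\<dots> = finprod H (\<lambda>x. h (x [^]\<^bsub>G\<^esub> c (h x))) S"
  proof (rule H.finprod_cong')
    show "(\<lambda>x. h (x [^]\<^bsub>G\<^esub> c (h x))) \<in> S \<rightarrow> carrier H"
      using SG by (auto intro!: hom_in_carrier[OF hh] G.int_pow_closed)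
    show "h x [^]\<^bsub>H\<^esub> c (h x) = h (x [^]\<^bsub>G\<^esub> c (h x))" if "x \<in> S" for x
      using hom_int_pow[OF hh _ G.is_group H.is_group] SG that by auto
  qed simp
  also have "\<dots> = h (finprod G (\<lambda>x. x [^]\<^bsub>G\<^esub> c (h x)) S)"
    by (rule hom_finprod_gen[symmetric, OF G H hh S]) (use SG in auto)
  finally have "h (finprod G (\<lambda>x. x [^]\<^bsub>G\<^esub> c (h x)) S) = h \<one>\<^bsub>G\<^esub>"
    using eq hom_one[OF hh G.is_group H.is_group] by simp
  moreover have "finprod G (\<lambda>x. x [^]\<^bsub>G\<^esub> c (h x)) S \<in> carrier G"
    using SG by (intro G.finprod_closed) auto
  ultimately have "finprod G (\<lambda>x. x [^]\<^bsub>G\<^esub> c (h x)) S = \<one>\<^bsub>G\<^esub>"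
    using inj_onD[OF inj] G.one_closed by blast
  then have "finprod G (\<lambda>x. x [^]\<^bsub>G\<^esub> ((c \<circ> h) x)) S = \<one>\<^bsub>G\<^esub>"
    by simp
  then have "\<forall>x\<in>S. (c \<circ> h) x = 0" using ind unfolding Z_independent_def by blast
  then show "c s = 0" using s by auto
qed

lemma rank_le_iso:
  assumes G: "comm_group G" and H: "comm_group H" and h: "h \<in> iso G H"
  shows "group_rank G \<le> group_rank H"
  unfolding group_rank_def
proof (rule SUP_least)
  fix S assume "S \<in> {S. finite S \<and> Z_independent G S}"
  then have S: "finite S" "Z_independent G S" by auto
  have inj: "inj_on h S" using h S(2) by (auto simp: iso_iff Z_independent_def intro: inj_on_subset)
  have "enat (card S) = enat (card (h ` S))" using card_image[OF inj] by simp
  also have "\<dots> \<le> (SUP S \<in> {S. finite S \<and> Z_independent H S}. enat (card S))"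
    by (rule SUP_upper) (use indep_transfer[OF G H h S] S in auto)
  finally show "enat (card S) \<le> (SUP S \<in> {S. finite S \<and> Z_independent H S}. enat (card S))" .
qed

lemma rank_iso:
  assumes G: "comm_group G" and H: "comm_group H" and i: "G \<cong> H"
  shows "group_rank G = group_rank H"
proof -
  have i2: "H \<cong> G" using i G by (simp add: comm_group.axioms(2) group.iso_sym)
  obtain h where "h \<in> iso G H" using i by (auto simp: is_iso_def)
  moreover obtain k where "k \<in> iso H G" using i2 by (auto simp: is_iso_def)
  ultimately show ?thesis using rank_le_iso G H by (meson antisym)
qed

lemma rank_trivial:
  assumes "trivial_group G"
  shows "group_rank G = 0"
proof -
  interpret G0: group G using assms by (simp add: trivial_group_def)
  interpret G: comm_group G
    by (rule G0.group_comm_groupI) (use assms in \<open>auto simp: trivial_group_def\<close>)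
  have "group_rank G \<le> 0"
    unfolding group_rank_def
  proof (rule SUP_least)
    fix S assume "S \<in> {S. finite S \<and> Z_independent G S}"
    then have S: "finite S" "Z_independent G S" by auto
    have "S = {}"
    proof (rule ccontr)
      assume "S \<noteq> {}"
      with S assms have Se: "S = {\<one>\<^bsub>G\<^esub>}" by (auto simp: Z_independent_def trivial_group_def)
      have fp: "finprod G (\<lambda>s. s [^]\<^bsub>G\<^esub> (1::int)) S = \<one>\<^bsub>G\<^esub>" unfolding Se
        by (rule G.finprod_one_eqI) simp
      have all: "\<forall>c::_\<Rightarrow>int. finprod G (\<lambda>s. s [^]\<^bsub>G\<^esub> (c s)) S = \<one>\<^bsub>G\<^esub> \<longrightarrow> (\<forall>s\<in>S. c s = 0)"
        using S(2) unfolding Z_independent_def by (rule conjunct2)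
      have "\<forall>s\<in>S. (1::int) = 0" using mp[OF spec[OF all, of "\<lambda>_. 1"] fp] .
      then show False using Se by simp
    qed
    then show "enat (card S) \<le> 0" by (simp add: zero_enat_def)
  qed
  then show ?thesis by simp
qed

lemma finprod_int: "finite S \<Longrightarrow> finprod integer_group f S = sum f S"
proof -
  interpret Z: comm_group integer_group by (rule abelian_integer_group)
  show "finite S \<Longrightarrow> finprod integer_group f S = sum f S"
  proof (induction S rule: finite_induct)
    case empty then show ?case by simp
  next
    case (insert a F)
    show ?case using insert by simp
  qed
qed

lemma rank_Z: "group_rank integer_group = 1"
proof (rule antisym)
  show "group_rank integer_group \<le> 1"
    unfolding group_rank_def
  proof (rule SUP_least)
    fix S assume "S \<in> {S. finite S \<and> Z_independent integer_group S}"
    then have S: "finite S" "Z_independent integer_group S" by auto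
    have "card S \<le> 1"
    proof (rule ccontr)
      assume "\<not> card S \<le> 1"
      then obtain a b where ab: "a \<in> S" "b \<in> S" "a \<noteq> b"
        by (metis S(1) One_nat_def card_le_Suc0_iff_eq)
      define c where "c = (\<lambda>s::int. if s = a then b else if s = b then -a else 0)"
      have "finprod integer_group (\<lambda>s. s [^]\<^bsub>integer_group\<^esub> c s) S = (\<Sum>s\<in>S. c s * s)"
        using S(1) by (simp add: finprod_int)
      also have "\<dots> = (\<Sum>s\<in>{a,b}. c s * s)"
        by (rule sum.mono_neutral_right) (use S(1) ab in \<open>auto simp: c_def\<close>)
      also have "\<dots> = 0" using ab by (simp add: c_def)
      finally have "\<forall>s\<in>S. c s = 0" using S(2) unfolding Z_independent_def one_integer_group by blast
      then have "c a = 0" "c b = 0" using ab by auto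
      then show False using ab by (simp add: c_def)
    qed
    then show "enat (card S) \<le> 1" by (simp add: one_enat_def)
  qed
  have "Z_independent integer_group {1}"
    unfolding Z_independent_def by (simp add: finprod_int)
  then have "enat (card {1::int}) \<le> group_rank integer_group"
    unfolding group_rank_def by (intro SUP_upper) auto
  then show "1 \<le> group_rank integer_group" by (simp add: one_enat_def)
qed


lemma Mplus_nonempty:
  assumes m: "m1 > 0" "m2 > 0" "m3 > 0" "m4 > 0"
  shows "Mplus m1 m2 m3 m4 \<noteq> {}"
proof -
  define k where "k = sqrt (2 * (m1 + m2 + m3 + m4) / (m1 * m2))"
  define p :: "real^6" where "p = (\<chi> i. if i = 1 then k else 0)"
  have k0: "k \<ge> 0" unfolding k_def using m by simp
  have k2: "k^2 = 2 * (m1 + m2 + m3 + m4) / (m1 * m2)" unfolding k_def using m by simp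
  have c: "p$1 = k" "p$2 = 0" "p$3 = 0" "p$4 = 0" "p$5 = 0" "p$6 = 0" unfolding p_def by simp_all
  have nn: "\<forall>i. p$i \<ge> 0" unfolding p_def using k0 by simp
  have M: "m1 + m2 + m3 + m4 > 0" using m by simp
  have "moment_I m1 m2 m3 m4 p = m1 * m2 * k^2 / (2 * (m1 + m2 + m3 + m4))"
    unfolding moment_I_def c by simp
  also have "\<dots> = 1"
  proof -
    have "m1 * m2 * k^2 = 2 * (m1 + m2 + m3 + m4)" unfolding k2 using m by simp
    then show ?thesis using M by simp
  qed
  finally have "p \<in> Mplus m1 m2 m3 m4"
    unfolding Mplus_def ptolemy_P_def using nn by (simp add: c)
  then show ?thesis by blast
qed

theorem lemma5:
  fixes m1 m2 m3 m4 :: real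
  assumes "m1 > 0" "m2 > 0" "m3 > 0" "m4 > 0"
  shows "contractible (Mplus m1 m2 m3 m4) \<and>
         has_euler_characteristic (subtopology euclidean (Mplus m1 m2 m3 m4)) 1"
proof -
  let ?M = "Mplus m1 m2 m3 m4"
  let ?X = "subtopology euclidean ?M"
  have C: "contractible ?M" by (rule contr[OF assms])
  have cs: "contractible_space ?X" using C by simp
  have ne: "topspace ?X \<noteq> {}" using Mplus_nonempty[OF assms] by simp
  have r: "group_rank (homology_group (int n) ?X) = (if n = 0 then 1 else 0)" for n
  proof (cases "n = 0")
    case True
    have "homology_group 0 ?X \<cong> integer_group"
      by (rule isomorphic_integer_zeroth_homology_group[OF contractible_imp_path_connected_space[OF cs] ne])
    then have "group_rank (homology_group 0 ?X) = group_rank integer_group"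
      by (rule rank_iso[OF abelian_homology_group abelian_integer_group])
    then show ?thesis using True rank_Z by simp
  next
    case False
    then have "int n \<noteq> 0" by simp
    then have "homology_group (int n) ?X = reduced_homology_group (int n) ?X"
      by (simp add: un_reduced_homology_group)
    then have "trivial_group (homology_group (int n) ?X)"
      using trivial_reduced_homology_group_contractible_space[OF cs] by simp
    then show ?thesis using False rank_trivial by simp
  qed
  have s: "{n::nat. group_rank (homology_group (int n) ?X) \<noteq> 0} = {0}"
    using r by auto
  have r0: "group_rank (homology_group (int 0) ?X) = 1" using r[of 0] by simp
  have A: "\<forall>n. group_rank (homology_group (int n) ?X) \<noteq> \<infinity>"
  proof
    fix n show "group_rank (homology_group (int n) ?X) \<noteq> \<infinity>"
      using r[of n] by (cases "n = 0") (simp_all add: one_enat_def zero_enat_def)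
  qed
  have B: "(\<Sum>n\<in>{0::nat}. (-1) ^ n * int (the_enat (group_rank (homology_group (int n) ?X)))) = 1"
    using r0 by (simp add: one_enat_def)
  have "has_euler_characteristic ?X 1"
    unfolding has_euler_characteristic_def s using A B by simp
  with C show ?thesis by simp
qed

end
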